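(* Let $U,V$ be $\mathrm{OST}$-monoids and $\alpha:U\to V$ a surjective monotone transmission, and let $\alpha=\rho\circ\mu\circ\beta\circ\lambda$ with $\lambda:U\to\bar U$, $\beta:\bar U\to W$, $\mu:W\to\bar W$, $\rho:\bar W\to V$ be a canonical factorization of $\alpha$. Then the supertropical monoids $\bar U,W,\bar W$ can be equipped with total orderings, in a unique way, such that they become $\mathrm{OST}$-monoids and all factors $\lambda,\beta,\mu,\rho$ are monotone transmissions.
   Context: A supertropical monoid is a commutative monoid $(U,\cdot)$ with absorbing element $0$ and distinguished idempotent $e$ with $ex=0\Rightarrow x=0$, together with a total ordering $\le_M$ on $M:=eU$, compatible with multiplication and with $0$ least, making $M$ a bipotent semiring (addition $=\max$). A transmission $\alpha:U\to V$ is a map with $\alpha(0)=0$, $\alpha(1)=1$, multiplicative, $\alpha(e_U)=e_V$, order-preserving on $eU$; ghost part $\gamma:=\alpha^\nu$ its restriction $eU\to eV$; ghost kernel $\mathfrak A_\alpha:=\{x:\alpha(x)\in eV\}$. An OST-monoid is a supertropical monoid with a total ordering $\le$ on $U$ such that $x\le y\Rightarrow xz\le yz$, $\le$ restricts to $\le_M$ on $M$, and $0\le1\le e$. A transmission between OST-monoids is monotone if $x\le y\Rightarrow\alpha(x)\le\alpha(y)$. Canonical factorization of a surjective transmission $\alpha$ with $N:=eV$: a factorization $\alpha=\rho\circ\mu\circ\beta\circ\lambda$ in which, up to isomorphisms over the ghost ideals, $\lambda=\pi_{E(U,\mathfrak A_\alpha)}:U\to\bar U=U/E(U,\mathfrak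 A_\alpha)$, $\beta=\pi_{F(\bar U,\gamma)}:\bar U\to W=\bar U/F(\bar U,\gamma)$, $\mu=\pi_T:W\to\bar W=W/T$ for a tangible MFCE-relation $T$ on $W$, and $\rho:\bar W\to V$ is an isomorphism of supertropical monoids whose ghost part is $\mathrm{id}_N$. Here quotients by TE-relations carry the unique supertropical monoid structure making the projection a transmission; $E(U,\mathfrak A)$ ($\mathfrak A\supseteq M$ an ideal): $x\sim y$ iff $x=y$ or ($x,y\in\mathfrak A$, $ex=ey$); $F(\bar U,\gamma)$: $x\sim y$ iff $x=y$, or $x,y\in M$ with $\gamma(x)=\gamma(y)$, or $\gamma(ex)=\gamma(ey)=0$ (ghost ideal of quotient identified with $N$); an MFCE-relation is a multiplicative equivalence relation with $x\sim y\Rightarrow ex=ey$, tangible if ghosts are equivalent only to themselves. *)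

theory Defs
  imports Main
begin

text \<open>A supertropical monoid carried by a whole type: multiplication, absorbing 0,
  unit 1, distinguished idempotent e, and the (total) order on the ghost ideal M = eU.\<close>

record 'a stm =
  stm_mul  :: "'a \<Rightarrow> 'a \<Rightarrow> 'a"
  stm_zero :: 'a
  stm_one  :: 'a
  stm_e    :: 'a
  stm_gle  :: "'a \<Rightarrow> 'a \<Rightarrow> bool"

definition ghosts :: "('a, 'z) stm_scheme \<Rightarrow> 'a set" where
  "ghosts S = range (stm_mul S (stm_e S))"

definition supertropical_monoid :: "('a, 'z) stm_scheme \<Rightarrow> bool" where
  "supertropical_monoid S \<longleftrightarrow>
     (let m = stm_mul S; M = ghosts S; le = stm_gle S in
      (\<forall>x y z. m (m x y) z = m x (m y z)) \<and>
      (\<forall>x y. m x y = m y x) \<and>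
      (\<forall>x. m (stm_one S) x = x) \<and>
      (\<forall>x. m (stm_zero S) x = stm_zero S) \<and>
      m (stm_e S) (stm_e S) = stm_e S \<and>
      (\<forall>x. m (stm_e S) x = stm_zero S \<longrightarrow> x = stm_zero S) \<and>
      (\<forall>x\<in>M. le x x) \<and>
      (\<forall>x\<in>M. \<forall>y\<in>M. le x y \<and> le y x \<longrightarrow> x = y) \<and>
      (\<forall>x\<in>M. \<forall>y\<in>M. \<forall>z\<in>M. le x y \<and> le y z \<longrightarrow> le x z) \<and>
      (\<forall>x\<in>M. \<forall>y\<in>M. le x y \<or> le y x) \<and>
      (\<forall>x\<in>M. \<forall>y\<in>M. \<forall>z\<in>M. le x y \<longrightarrow> le (m x z) (m y z)) \<and>
      (\<forall>x\<in>M. le (stm_zero S) x))"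

definition transmission ::
  "('a, 'z) stm_scheme \<Rightarrow> ('b, 'w) stm_scheme \<Rightarrow> ('a \<Rightarrow> 'b) \<Rightarrow> bool" where
  "transmission U V f \<longleftrightarrow>
     f (stm_zero U) = stm_zero V \<and>
     f (stm_one U) = stm_one V \<and>
     (\<forall>x y. f (stm_mul U x y) = stm_mul V (f x) (f y)) \<and>
     f (stm_e U) = stm_e V \<and>
     (\<forall>x\<in>ghosts U. \<forall>y\<in>ghosts U. stm_gle U x y \<longrightarrow> stm_gle V (f x) (f y))"

definition stm_iso ::
  "('a, 'z) stm_scheme \<Rightarrow> ('b, 'w) stm_scheme \<Rightarrow> ('a \<Rightarrow> 'b) \<Rightarrow> bool" where
  "stm_iso U V f \<longleftrightarrow> transmission U V f \<and> bij f \<and> transmission V U (inv f)"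

definition ghost_kernel :: "('b, 'w) stm_scheme \<Rightarrow> ('a \<Rightarrow> 'b) \<Rightarrow> 'a set" where
  "ghost_kernel V f = {x. f x \<in> ghosts V}"

definition ost_monoid :: "('a, 'z) stm_scheme \<Rightarrow> ('a \<Rightarrow> 'a \<Rightarrow> bool) \<Rightarrow> bool" where
  "ost_monoid S le \<longleftrightarrow>
     supertropical_monoid S \<and>
     (\<forall>x. le x x) \<and>
     (\<forall>x y. le x y \<and> le y x \<longrightarrow> x = y) \<and>
     (\<forall>x y z. le x y \<and> le y z \<longrightarrow> le x z) \<and>
     (\<forall>x y. le x y \<or> le y x) \<and>
     (\<forall>x y z. le x y \<longrightarrow> le (stm_mul S x z) (stm_mul S y z)) \<and>
     (\<forall>x\<in>ghosts S. \<forall>y\<in>ghosts S. le x y \<longleftrightarrow> stm_gle S x y) \<and>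
     le (stm_zero S) (stm_one S) \<and>
     le (stm_one S) (stm_e S)"

definition E_rel :: "('a, 'z) stm_scheme \<Rightarrow> 'a set \<Rightarrow> 'a \<Rightarrow> 'a \<Rightarrow> bool" where
  "E_rel U A x y \<longleftrightarrow> x = y \<or> (x \<in> A \<and> y \<in> A \<and> stm_mul U (stm_e U) x = stm_mul U (stm_e U) y)"

text \<open>The equivalence relation F(U,gamma), gamma a map from (the ghost ideal of) U to
  the ghost ideal N of V; 0 is the zero of V.\<close>
definition F_rel :: "('a, 'z) stm_scheme \<Rightarrow> 'n \<Rightarrow> ('a \<Rightarrow> 'n) \<Rightarrow> 'a \<Rightarrow> 'a \<Rightarrow> bool" where
  "F_rel U z0 \<gamma> x y \<longleftrightarrow> x = y \<or>
     (x \<in> ghosts U \<and> y \<in> ghosts U \<and> \<gamma> x = \<gamma> y) \<or>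
     (\<gamma> (stm_mul U (stm_e U) x) = z0 \<and> \<gamma> (stm_mul U (stm_e U) y) = z0)"

definition tangible_MFCE :: "('a, 'z) stm_scheme \<Rightarrow> ('a \<Rightarrow> 'a \<Rightarrow> bool) \<Rightarrow> bool" where
  "tangible_MFCE W T \<longleftrightarrow>
     (\<forall>x. T x x) \<and> (\<forall>x y. T x y \<longrightarrow> T y x) \<and> (\<forall>x y z. T x y \<and> T y z \<longrightarrow> T x z) \<and>
     (\<forall>x y z. T x y \<longrightarrow> T (stm_mul W x z) (stm_mul W y z)) \<and>
     (\<forall>x y. T x y \<longrightarrow> stm_mul W (stm_e W) x = stm_mul W (stm_e W) y) \<and>
     (\<forall>x y. x \<in> ghosts W \<and> T x y \<longrightarrow> x = y)"

text \<open>Canonical factorization of a surjective transmission alpha : U -> V as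
  alpha = rho o mu o beta o lam, each factor described up to isomorphism over the
  ghost ideals, i.e. as a surjective transmission whose fibres are exactly the classes
  of the prescribed equivalence relation (the quotient then carries the unique
  supertropical structure making the projection a transmission).  The map gamma used
  in F is the ghost part of alpha transported to Ubar along lam.\<close>
definition canonical_factorization ::
  "('a, 'z1) stm_scheme \<Rightarrow> ('b, 'z2) stm_scheme \<Rightarrow> ('c, 'z3) stm_scheme \<Rightarrow>
   ('d, 'z4) stm_scheme \<Rightarrow> ('e, 'z5) stm_scheme \<Rightarrow> ('a \<Rightarrow> 'e) \<Rightarrow>
   ('a \<Rightarrow> 'b) \<Rightarrow> ('b \<Rightarrow> 'c) \<Rightarrow> ('c \<Rightarrow> 'd) \<Rightarrow> ('d \<Rightarrow> 'e) \<Rightarrow> bool" where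
  "canonical_factorization U Ub W Wb V \<alpha> lam \<beta> \<mu> \<rho> \<longleftrightarrow>
     supertropical_monoid Ub \<and> supertropical_monoid W \<and> supertropical_monoid Wb \<and>
     (\<forall>x. \<alpha> x = \<rho> (\<mu> (\<beta> (lam x)))) \<and>
     transmission U Ub lam \<and> surj lam \<and>
     (\<forall>x y. lam x = lam y \<longleftrightarrow> E_rel U (ghost_kernel V \<alpha>) x y) \<and>
     transmission Ub W \<beta> \<and> surj \<beta> \<and>
     (\<forall>x y. \<beta> x = \<beta> y \<longleftrightarrow> F_rel Ub (stm_zero V) (\<lambda>u. \<alpha> (inv lam u)) x y) \<and>
     transmission W Wb \<mu> \<and> surj \<mu> \<and>
     (\<exists>T. tangible_MFCE W T \<and> (\<forall>x y. \<mu> x = \<mu> y \<longleftrightarrow> T x y)) \<and>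
     stm_iso Wb V \<rho>"

end

theory Submission
  imports Defs
begin


definition push :: "('a \<Rightarrow> 'a \<Rightarrow> bool) \<Rightarrow> ('a \<Rightarrow> 'b) \<Rightarrow> 'b \<Rightarrow> 'b \<Rightarrow> bool" where
  "push le f u v \<longleftrightarrow> (\<exists>x y. f x = u \<and> f y = v \<and> le x y)"

lemma trans_ghost:
  assumes "transmission S T f" "x \<in> ghosts S" shows "f x \<in> ghosts T"
proof -
  obtain w where "x = stm_mul S (stm_e S) w" using assms(2) unfolding ghosts_def by auto
  hence "f x = stm_mul T (stm_e T) (f w)" using assms(1) unfolding transmission_def by auto
  thus ?thesis unfolding ghosts_def by auto
qed

lemma trans_comp:
  assumes "transmission S T f" "transmission T R g" shows "transmission S R (\<lambda>x. g (f x))"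
  using assms trans_ghost[OF assms(1)] unfolding transmission_def by auto

lemma ghost_fix:
  assumes "supertropical_monoid S" "x \<in> ghosts S" shows "stm_mul S (stm_e S) x = x"
proof -
  obtain w where w: "x = stm_mul S (stm_e S) w" using assms(2) unfolding ghosts_def by auto
  have "stm_mul S (stm_e S) (stm_mul S (stm_e S) w) = stm_mul S (stm_mul S (stm_e S) (stm_e S)) w"
    using assms(1) unfolding supertropical_monoid_def Let_def by metis
  also have "\<dots> = stm_mul S (stm_e S) w" using assms(1) unfolding supertropical_monoid_def Let_def by metis
  finally show ?thesis using w by simp
qed

lemma push_ost:
  assumes ost: "ost_monoid S le" and st: "supertropical_monoid T" and tr: "transmission S T f"
    and sj: "surj f" and cv: "\<And>x y z. f x = f y \<Longrightarrow> le x z \<Longrightarrow> le z y \<Longrightarrow> f z = f x"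
  shows "ost_monoid T (push le f)" "monotone le (push le f) f"
proof -
  let ?P = "push le f"
  have refl: "\<And>x. le x x" and asym: "\<And>x y. le x y \<Longrightarrow> le y x \<Longrightarrow> x = y"
    and trn: "\<And>x y z. le x y \<Longrightarrow> le y z \<Longrightarrow> le x z" and tot: "\<And>x y. le x y \<or> le y x"
    and mc: "\<And>x y z. le x y \<Longrightarrow> le (stm_mul S x z) (stm_mul S y z)"
    and gh: "\<And>x y. x \<in> ghosts S \<Longrightarrow> y \<in> ghosts S \<Longrightarrow> le x y \<longleftrightarrow> stm_gle S x y"
    and z1: "le (stm_zero S) (stm_one S)" and oe: "le (stm_one S) (stm_e S)"
    and stS: "supertropical_monoid S"
    using ost unfolding ost_monoid_def by blast+
  have commS: "\<And>x y. stm_mul S x y = stm_mul S y x" using stS unfolding supertropical_monoid_def Let_def by metis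
  have fm: "\<And>x y. f (stm_mul S x y) = stm_mul T (f x) (f y)" using tr unfolding transmission_def by blast
  have fe: "f (stm_e S) = stm_e T" and f0: "f (stm_zero S) = stm_zero T" and f1: "f (stm_one S) = stm_one T"
    using tr unfolding transmission_def by blast+
  have fg: "\<And>x y. x \<in> ghosts S \<Longrightarrow> y \<in> ghosts S \<Longrightarrow> stm_gle S x y \<Longrightarrow> stm_gle T (f x) (f y)"
    using tr unfolding transmission_def by blast
  have surjE: "\<And>u. \<exists>x. f x = u" using sj by (metis surjD)
  have Prefl: "\<And>u. ?P u u" unfolding push_def using surjE refl by metis
  have Pasym: "\<And>u v. ?P u v \<Longrightarrow> ?P v u \<Longrightarrow> u = v"
  proof -
    fix u v assume "?P u v" "?P v u"
    then obtain x y x' y' where h: "f x = u" "f y = v" "le x y" "f y' = v" "f x' = u" "le y' x'"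
      unfolding push_def by blast
    show "u = v"
    proof (cases "le x' y")
      case True
      have "f x' = f y" using cv[of y' y x'] h True by auto
      thus ?thesis using h by auto
    next
      case False
      hence "le y x'" using tot by blast
      have "f y = f x" using cv[of x x' y] h \<open>le y x'\<close> by auto
      thus ?thesis using h by auto
    qed
  qed
  have Ptrans: "\<And>u v w. ?P u v \<Longrightarrow> ?P v w \<Longrightarrow> ?P u w"
  proof -
    fix u v w assume "?P u v" "?P v w"
    then obtain x y y' z where h: "f x = u" "f y = v" "le x y" "f y' = v" "f z = w" "le y' z"
      unfolding push_def by blast
    show "?P u w"
    proof (cases "le y y'")
      case True
      then show ?thesis unfolding push_def using h trn by metis
    next
      case False
      hence yy: "le y' y" using tot by blast
      show ?thesis
      proof (cases "le x z")
        case True then show ?thesis unfolding push_def using h by metis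
      next
        case False
        hence "le z x" using tot by blast
        have a: "f z = f y'" using cv[of y' y z] h yy \<open>le z x\<close> trn by metis
        have b: "f x = f y'" using cv[of y' y x] h yy \<open>le z x\<close> trn by metis
        show ?thesis unfolding push_def using a b h refl by metis
      qed
    qed
  qed
  have Ptot: "\<And>u v. ?P u v \<or> ?P v u" unfolding push_def using surjE tot by metis
  have Pmc: "\<And>u v w. ?P u v \<Longrightarrow> ?P (stm_mul T u w) (stm_mul T v w)"
    unfolding push_def using surjE mc fm by metis
  have Pgh1: "\<And>u v. u \<in> ghosts T \<Longrightarrow> v \<in> ghosts T \<Longrightarrow> ?P u v \<Longrightarrow> stm_gle T u v"
  proof -
    fix u v assume gu: "u \<in> ghosts T" and gv: "v \<in> ghosts T" and "?P u v"
    then obtain x y where h: "f x = u" "f y = v" "le x y" unfolding push_def by blast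
    have l: "le (stm_mul S (stm_e S) x) (stm_mul S (stm_e S) y)" using mc[OF h(3)] commS by metis
    have g1: "stm_mul S (stm_e S) x \<in> ghosts S" "stm_mul S (stm_e S) y \<in> ghosts S" unfolding ghosts_def by auto
    have "stm_gle T (f (stm_mul S (stm_e S) x)) (f (stm_mul S (stm_e S) y))"
      using fg[OF g1] gh[OF g1] l by blast
    moreover have "f (stm_mul S (stm_e S) x) = u" using fm fe h ghost_fix[OF st gu] by metis
    moreover have "f (stm_mul S (stm_e S) y) = v" using fm fe h ghost_fix[OF st gv] by metis
    ultimately show "stm_gle T u v" by simp
  qed
  have gleT_asym: "\<And>u v. u \<in> ghosts T \<Longrightarrow> v \<in> ghosts T \<Longrightarrow> stm_gle T u v \<Longrightarrow> stm_gle T v u \<Longrightarrow> u = v"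
    using st unfolding supertropical_monoid_def Let_def by blast
  have Pgh: "\<And>u v. u \<in> ghosts T \<Longrightarrow> v \<in> ghosts T \<Longrightarrow> ?P u v \<longleftrightarrow> stm_gle T u v"
    using Pgh1 gleT_asym Ptot Prefl by metis
  have P01: "?P (stm_zero T) (stm_one T)" unfolding push_def using z1 f0 f1 by metis
  have P1e: "?P (stm_one T) (stm_e T)" unfolding push_def using oe f1 fe by metis
  have A1: "\<forall>x. ?P x x" using Prefl by blast
  have A2: "\<forall>x y. ?P x y \<and> ?P y x \<longrightarrow> x = y" using Pasym by blast
  have A3: "\<forall>x y z. ?P x y \<and> ?P y z \<longrightarrow> ?P x z" using Ptrans by blast
  have A4: "\<forall>x y. ?P x y \<or> ?P y x" using Ptot by blast
  have A5: "\<forall>x y z. ?P x y \<longrightarrow> ?P (stm_mul T x z) (stm_mul T y z)" using Pmc by blast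
  have A6: "\<forall>x\<in>ghosts T. \<forall>y\<in>ghosts T. ?P x y \<longleftrightarrow> stm_gle T x y" using Pgh by blast
  show "ost_monoid T ?P" unfolding ost_monoid_def
    using st A1 A2 A3 A4 A5 A6 P01 P1e by (intro conjI)
  show "monotone le ?P f" unfolding monotone_def push_def by blast
qed

lemma push_unique:
  assumes "ost_monoid T l" "\<And>x y. le x y \<or> le y x" "\<And>x. le x x" "surj f" "monotone le l f"
  shows "l = push le f"
proof (intro ext iffI)
  fix u v
  have la: "\<And>a b. l a b \<Longrightarrow> l b a \<Longrightarrow> a = b" and lr: "\<And>a. l a a"
    using assms(1) unfolding ost_monoid_def by blast+
  have mo: "\<And>x y. le x y \<Longrightarrow> l (f x) (f y)" using assms(5) unfolding monotone_def by blast
  obtain x y where h: "f x = u" "f y = v" using assms(4) by (metis surjD)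
  { assume "l u v"
    show "push le f u v"
    proof (cases "le x y")
      case True thus ?thesis unfolding push_def using h by blast
    next
      case False
      hence "l v u" using mo assms(2) h by metis
      hence "u = v" using la \<open>l u v\<close> by blast
      thus ?thesis unfolding push_def using h assms(3) by metis
    qed }
  { assume "push le f u v" thus "l u v" unfolding push_def using mo by blast }
qed

lemma push_comp: "surj f \<Longrightarrow> push (push le f) g = push le (\<lambda>x. g (f x))"
  unfolding push_def by (intro ext) (metis surjD)


theorem theorem61p14:
  fixes U :: "'a stm" and Ub :: "'b stm" and W :: "'c stm" and Wb :: "'d stm"
    and V :: "'e stm"
    and leU :: "'a \<Rightarrow> 'a \<Rightarrow> bool" and leV :: "'e \<Rightarrow> 'e \<Rightarrow> bool"
    and \<alpha> :: "'a \<Rightarrow> 'e" and lam :: "'a \<Rightarrow> 'b" and \<beta> :: "'b \<Rightarrow> 'c"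
    and \<mu> :: "'c \<Rightarrow> 'd" and \<rho> :: "'d \<Rightarrow> 'e"
  assumes "ost_monoid U leU" and "ost_monoid V leV"
    and "transmission U V \<alpha>" and "surj \<alpha>" and "monotone leU leV \<alpha>"
    and "canonical_factorization U Ub W Wb V \<alpha> lam \<beta> \<mu> \<rho>"
  shows "\<exists>!(leUb, leW, leWb).
           ost_monoid Ub leUb \<and> ost_monoid W leW \<and> ost_monoid Wb leWb \<and>
           monotone leU leUb lam \<and> monotone leUb leW \<beta> \<and>
           monotone leW leWb \<mu> \<and> monotone leWb leV \<rho>"
proof -
  have cf: "supertropical_monoid Ub \<and> supertropical_monoid W \<and> supertropical_monoid Wb \<and>
     (\<forall>x. \<alpha> x = \<rho> (\<mu> (\<beta> (lam x)))) \<and>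
     transmission U Ub lam \<and> surj lam \<and>
     (\<forall>x y. lam x = lam y \<longleftrightarrow> E_rel U (ghost_kernel V \<alpha>) x y) \<and>
     transmission Ub W \<beta> \<and> surj \<beta> \<and>
     (\<forall>x y. \<beta> x = \<beta> y \<longleftrightarrow> F_rel Ub (stm_zero V) (\<lambda>u. \<alpha> (inv lam u)) x y) \<and>
     transmission W Wb \<mu> \<and> surj \<mu> \<and>
     (\<exists>T. tangible_MFCE W T \<and> (\<forall>x y. \<mu> x = \<mu> y \<longleftrightarrow> T x y)) \<and>
     stm_iso Wb V \<rho>" using assms(6) unfolding canonical_factorization_def .
  have stUb: "supertropical_monoid Ub" using cf by (rule conjunct1)
  have stW: "supertropical_monoid W" using cf by (elim conjE)
  have stWb: "supertropical_monoid Wb" using cf by (elim conjE)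
  have comp0: "\<forall>x. \<alpha> x = \<rho> (\<mu> (\<beta> (lam x)))" using cf by (elim conjE)
  have tl: "transmission U Ub lam" using cf by (elim conjE)
  have sl: "surj lam" using cf by (elim conjE)
  have El0: "\<forall>x y. lam x = lam y \<longleftrightarrow> E_rel U (ghost_kernel V \<alpha>) x y" using cf by (elim conjE)
  have tb: "transmission Ub W \<beta>" using cf by (elim conjE)
  have sb: "surj \<beta>" using cf by (elim conjE)
  have Fb0: "\<forall>x y. \<beta> x = \<beta> y \<longleftrightarrow> F_rel Ub (stm_zero V) (\<lambda>u. \<alpha> (inv lam u)) x y"
    using cf by (elim conjE)
  have tm: "transmission W Wb \<mu>" using cf by (elim conjE)
  have sm: "surj \<mu>" using cf by (elim conjE)
  have iso: "stm_iso Wb V \<rho>" using cf by (elim conjE)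
  have comp: "\<And>x. \<alpha> x = \<rho> (\<mu> (\<beta> (lam x)))" using comp0 by blast
  have El: "\<And>x y. lam x = lam y \<longleftrightarrow> E_rel U (ghost_kernel V \<alpha>) x y" using El0 by blast
  have Fb: "\<And>x y. \<beta> x = \<beta> y \<longleftrightarrow> F_rel Ub (stm_zero V) (\<lambda>u. \<alpha> (inv lam u)) x y" using Fb0 by blast
  have ostU: "ost_monoid U leU" and ostV: "ost_monoid V leV" using assms by blast+
  have reflU: "\<And>x. leU x x" and asymU: "\<And>x y. leU x y \<Longrightarrow> leU y x \<Longrightarrow> x = y"
    and totU: "\<And>x y. leU x y \<or> leU y x"
    and mcU: "\<And>x y z. leU x y \<Longrightarrow> leU (stm_mul U x z) (stm_mul U y z)"
    and stU: "supertropical_monoid U"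
    using ostU unfolding ost_monoid_def by blast+
  have asymV: "\<And>x y. leV x y \<Longrightarrow> leV y x \<Longrightarrow> x = y" and stV: "supertropical_monoid V"
    using ostV unfolding ost_monoid_def by blast+
  have monoA: "\<And>x y. leU x y \<Longrightarrow> leV (\<alpha> x) (\<alpha> y)" using assms(5) unfolding monotone_def by blast
  have commU: "\<And>x y. stm_mul U x y = stm_mul U y x" using stU unfolding supertropical_monoid_def Let_def by metis
  have assocU: "\<And>x y z. stm_mul U (stm_mul U x y) z = stm_mul U x (stm_mul U y z)"
    using stU unfolding supertropical_monoid_def Let_def by metis
  have eeU: "stm_mul U (stm_e U) (stm_e U) = stm_e U" using stU unfolding supertropical_monoid_def Let_def by metis
  have commV: "\<And>x y. stm_mul V x y = stm_mul V y x" using stV unfolding supertropical_monoid_def Let_def by metis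
  have zV: "\<And>x. stm_mul V (stm_zero V) x = stm_zero V" using stV unfolding supertropical_monoid_def Let_def by metis
  have eV0: "\<And>x. stm_mul V (stm_e V) x = stm_zero V \<Longrightarrow> x = stm_zero V"
    using stV unfolding supertropical_monoid_def Let_def by metis
  have am: "\<And>x y. \<alpha> (stm_mul U x y) = stm_mul V (\<alpha> x) (\<alpha> y)" and ae: "\<alpha> (stm_e U) = stm_e V"
    using assms(3) unfolding transmission_def by blast+
  have lm: "\<And>x y. lam (stm_mul U x y) = stm_mul Ub (lam x) (lam y)" and le_: "lam (stm_e U) = stm_e Ub"
    using tl unfolding transmission_def by blast+
  have rinj: "inj \<rho>" using iso unfolding stm_iso_def bij_def by blast
  let ?A = "ghost_kernel V \<alpha>"
  let ?eU = "stm_mul U (stm_e U)"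
  have eeUx: "\<And>z. ?eU (?eU z) = ?eU z" using assocU eeU by metis
  have squeeze: "\<And>x y z. \<alpha> x = \<alpha> y \<Longrightarrow> leU x z \<Longrightarrow> leU z y \<Longrightarrow> \<alpha> z = \<alpha> x"
    using monoA asymV by metis
  have lamA: "\<And>x y. lam x = lam y \<Longrightarrow> \<alpha> x = \<alpha> y" using comp by metis
  have eleU: "\<And>x y. leU x y \<Longrightarrow> leU (?eU x) (?eU y)" using mcU commU by metis
  have Aghost: "\<And>z. z \<in> ?A \<Longrightarrow> lam z = lam (?eU z)"
  proof -
    fix z assume "z \<in> ?A"
    moreover have "?eU z \<in> ?A" unfolding ghost_kernel_def ghosts_def using am ae by auto
    ultimately have "E_rel U ?A z (?eU z)" unfolding E_rel_def using eeUx by metis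
    thus "lam z = lam (?eU z)" using El by blast
  qed
  have cv1: "\<And>x y z. lam x = lam y \<Longrightarrow> leU x z \<Longrightarrow> leU z y \<Longrightarrow> lam z = lam x"
  proof -
    fix x y z assume h: "lam x = lam y" "leU x z" "leU z y"
    have "E_rel U ?A x y" using El h(1) by blast
    then consider "x = y" | "x \<in> ?A" "y \<in> ?A" "?eU x = ?eU y" unfolding E_rel_def by blast
    then show "lam z = lam x"
    proof cases
      case 1 thus ?thesis using h asymU by metis
    next
      case 2
      have ez: "?eU z = ?eU x" using eleU[OF h(2)] eleU[OF h(3)] 2(3) asymU by metis
      have "\<alpha> z = \<alpha> x" using squeeze[OF lamA[OF h(1)] h(2) h(3)] .
      hence "z \<in> ?A" using 2(1) unfolding ghost_kernel_def by simp
      hence "E_rel U ?A x z" using 2 ez unfolding E_rel_def by metis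
      thus ?thesis using El by metis
    qed
  qed
  have gam: "\<And>x. \<alpha> (inv lam (lam x)) = \<alpha> x" by (rule lamA, rule surj_f_inv_f[OF sl])
  have cv2: "\<And>x y z. \<beta> (lam x) = \<beta> (lam y) \<Longrightarrow> leU x z \<Longrightarrow> leU z y \<Longrightarrow> \<beta> (lam z) = \<beta> (lam x)"
  proof -
    fix x y z assume h: "\<beta> (lam x) = \<beta> (lam y)" "leU x z" "leU z y"
    have F: "F_rel Ub (stm_zero V) (\<lambda>u. \<alpha> (inv lam u)) (lam x) (lam y)" using Fb h(1) by blast
    have elam: "\<And>w. stm_mul Ub (stm_e Ub) (lam w) = lam (?eU w)" using lm le_ by metis
    consider "lam x = lam y"
      | "lam x \<in> ghosts Ub" "lam y \<in> ghosts Ub" "\<alpha> x = \<alpha> y"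
      | "\<alpha> (?eU x) = stm_zero V" "\<alpha> (?eU y) = stm_zero V"
      using F unfolding F_rel_def gam elam by blast
    then show "\<beta> (lam z) = \<beta> (lam x)"
    proof cases
      case 1 thus ?thesis using cv1 h by metis
    next
      case 2
      have az: "\<alpha> z = \<alpha> x" using squeeze[OF 2(3) h(2) h(3)] .
      have "\<alpha> x \<in> ghosts V" using comp trans_ghost[OF tb] trans_ghost[OF tm]
          trans_ghost[OF conjunct1[OF iso[unfolded stm_iso_def]]] 2(1) by metis
      hence "z \<in> ?A" using az unfolding ghost_kernel_def by simp
      hence "lam z = lam (?eU z)" using Aghost by blast
      hence gz: "lam z \<in> ghosts Ub" using elam unfolding ghosts_def by (metis rangeI)
      have "F_rel Ub (stm_zero V) (\<lambda>u. \<alpha> (inv lam u)) (lam z) (lam x)"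
        unfolding F_rel_def using gz 2(1) az gam by simp
      thus ?thesis using Fb by blast
    next
      case 3
      have ax: "\<alpha> x = stm_zero V" using eV0 3(1) am ae by metis
      have ay: "\<alpha> y = stm_zero V" using eV0 3(2) am ae by metis
      have az: "\<alpha> z = stm_zero V" using squeeze[of x y z] ax ay h by metis
      have "\<alpha> (?eU z) = stm_zero V" using am ae az zV commV by metis
      hence "F_rel Ub (stm_zero V) (\<lambda>u. \<alpha> (inv lam u)) (lam z) (lam x)"
        unfolding F_rel_def gam elam using 3(1) by simp
      thus ?thesis using Fb by blast
    qed
  qed
  have cv3: "\<And>x y z. \<mu> (\<beta> (lam x)) = \<mu> (\<beta> (lam y)) \<Longrightarrow> leU x z \<Longrightarrow> leU z y
      \<Longrightarrow> \<mu> (\<beta> (lam z)) = \<mu> (\<beta> (lam x))"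
  proof -
    fix x y z assume h: "\<mu> (\<beta> (lam x)) = \<mu> (\<beta> (lam y))" "leU x z" "leU z y"
    have "\<alpha> x = \<alpha> y" using h(1) comp by metis
    hence "\<alpha> z = \<alpha> x" using squeeze h by metis
    thus "\<mu> (\<beta> (lam z)) = \<mu> (\<beta> (lam x))" using comp rinj by (metis injD)
  qed
  have t2: "transmission U W (\<lambda>x. \<beta> (lam x))" using trans_comp[OF tl tb] .
  have t3: "transmission U Wb (\<lambda>x. \<mu> (\<beta> (lam x)))" using trans_comp[OF t2 tm] .
  have s2: "surj (\<lambda>x. \<beta> (lam x))" using comp_surj[OF sl sb] by (simp add: o_def)
  have s3: "surj (\<lambda>x. \<mu> (\<beta> (lam x)))" using comp_surj[OF s2 sm] by (simp add: o_def)
  define P1 where "P1 = push leU lam"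
  define P2 where "P2 = push leU (\<lambda>x. \<beta> (lam x))"
  define P3 where "P3 = push leU (\<lambda>x. \<mu> (\<beta> (lam x)))"
  have P2': "P2 = push P1 \<beta>" unfolding P1_def P2_def using push_comp[OF sl] by metis
  have P3': "P3 = push P2 \<mu>" unfolding P3_def P2_def using push_comp[OF s2, of leU \<mu>] by simp
  have o1: "ost_monoid Ub P1" and m1: "monotone leU P1 lam"
    unfolding P1_def
    by (rule push_ost(1)[OF ostU stUb tl sl], rule cv1, assumption+)
       (rule push_ost(2)[OF ostU stUb tl sl], rule cv1, assumption+)
  have o2: "ost_monoid W P2" unfolding P2_def
    by (rule push_ost(1)[OF ostU stW t2 s2], rule cv2, assumption+)
  have o3: "ost_monoid Wb P3" unfolding P3_def
    by (rule push_ost(1)[OF ostU stWb t3 s3], rule cv3, assumption+)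
  have m2: "monotone P1 P2 \<beta>" unfolding P2' monotone_def push_def by blast
  have m3: "monotone P2 P3 \<mu>" unfolding P3' monotone_def push_def by blast
  have m4: "monotone P3 leV \<rho>" unfolding P3_def monotone_def push_def using monoA comp by metis
  have E: "ost_monoid Ub P1 \<and> ost_monoid W P2 \<and> ost_monoid Wb P3 \<and>
           monotone leU P1 lam \<and> monotone P1 P2 \<beta> \<and> monotone P2 P3 \<mu> \<and> monotone P3 leV \<rho>"
    using o1 o2 o3 m1 m2 m3 m4 by blast
  show ?thesis
  proof (rule ex1I[of _ "(P1, P2, P3)"])
    show "case (P1, P2, P3) of (leUb, leW, leWb) \<Rightarrow>
           ost_monoid Ub leUb \<and> ost_monoid W leW \<and> ost_monoid Wb leWb \<and>
           monotone leU leUb lam \<and> monotone leUb leW \<beta> \<and>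
           monotone leW leWb \<mu> \<and> monotone leWb leV \<rho>" using E by simp
  next
    fix t assume H: "case t of (leUb, leW, leWb) \<Rightarrow>
           ost_monoid Ub leUb \<and> ost_monoid W leW \<and> ost_monoid Wb leWb \<and>
           monotone leU leUb lam \<and> monotone leUb leW \<beta> \<and>
           monotone leW leWb \<mu> \<and> monotone leWb leV \<rho>"
    obtain l1 l2 l3 where t: "t = (l1, l2, l3)" using prod_cases3 by blast
    have H': "ost_monoid Ub l1 \<and> ost_monoid W l2 \<and> ost_monoid Wb l3 \<and>
           monotone leU l1 lam \<and> monotone l1 l2 \<beta> \<and> monotone l2 l3 \<mu> \<and> monotone l3 leV \<rho>"
      using H unfolding t by simp
    have h1: "ost_monoid Ub l1" using H' by (elim conjE)
    have h2: "ost_monoid W l2" using H' by (elim conjE)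
    have h3: "ost_monoid Wb l3" using H' by (elim conjE)
    have g1: "monotone leU l1 lam" using H' by (elim conjE)
    have g2: "monotone l1 l2 \<beta>" using H' by (elim conjE)
    have g3: "monotone l2 l3 \<mu>" using H' by (elim conjE)
    have e1: "l1 = P1" unfolding P1_def by (rule push_unique[OF h1 totU reflU sl g1])
    have r1a: "\<forall>x y. l1 x y \<or> l1 y x" using h1 unfolding ost_monoid_def by (elim conjE)
    have r1b: "\<forall>x. l1 x x" using h1 unfolding ost_monoid_def by (elim conjE)
    have r1: "\<And>x y. l1 x y \<or> l1 y x" "\<And>x. l1 x x" using r1a r1b by blast+
    have e2: "l2 = P2" unfolding P2' e1[symmetric] by (rule push_unique[OF h2 r1 sb g2])
    have r2a: "\<forall>x y. l2 x y \<or> l2 y x" using h2 unfolding ost_monoid_def by (elim conjE)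
    have r2b: "\<forall>x. l2 x x" using h2 unfolding ost_monoid_def by (elim conjE)
    have r2: "\<And>x y. l2 x y \<or> l2 y x" "\<And>x. l2 x x" using r2a r2b by blast+
    have e3: "l3 = P3" unfolding P3' e2[symmetric] by (rule push_unique[OF h3 r2 sm g3])
    show "t = (P1, P2, P3)" using t e1 e2 e3 by simp
  qed
qed

end
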